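(* There is an absolute constant $C$ such that for every odd prime $p$ and every integer $n\ge2$ the following holds. Let $$|\psi\rangle=\Big(I^{\otimes(n-1)}\otimes\big(A_{\pi/p}^\dagger H\big)^{\otimes(n-1)}\otimes\big(e^{-i\pi X/4}H\big)\Big)|\mathrm{PM}_n\rangle,$$ where the identities act on the edge qubits, the $A_{\pi/p}^\dagger H$ factors on the vertex qubits $v_1,\dots,v_{n-1}$, and the last factor on the root vertex qubit $v_0$. Then the distribution $P_\psi$ on $\{0,1\}^{2n-2}\times\{0,1\}$ obtained by measuring $|\psi\rangle$ in the computational basis satisfies $$\Delta\big(P_\psi,(Z,\mathrm{pmmajmod}_p(Z))\big)\le\tfrac12-\tfrac1\pi+\tfrac1{2p}+Cp^{3/2}e^{-n/(4p^2)},$$ where $Z$ is uniform on $\{0,1\}^{2n-2}$.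
   Context: $H$ Hadamard, $X$ Pauli-$X$, $A_\theta=|0\rangle\langle0|+e^{-i\theta X}|1\rangle\langle1|$ (non-unitary). Measurement of a nonzero vector gives outcome $z$ with probability $|\langle z|\psi\rangle|^2/\|\psi\|^2$. Binary tree $B_n$: vertices $v_0,\dots,v_{n-1}$, root $v_0$; parent of $v_i$ ($i\ge1$) is $v_{\lfloor(i-1)/2\rfloor}$, $e_i$ joins $v_i$ to its parent; $h(d)_i=\bigoplus_{j:\,e_j\text{ on path }v_0\to v_i}d_j$ for $d\in\{0,1\}^{n-1}$. $|\mathrm{PM}_n\rangle=\sum_{d}2^{-(n-1)/2}|d\rangle\otimes\frac1{\sqrt2}(|h(d)\,0\rangle+|\overline{h(d)}\,1\rangle)$, qubits ordered $e_1,\dots,e_{n-1},v_1,\dots,v_{n-1},v_0$. For odd prime $p$ and integer $a$, $\mathrm{MM}_p(a)=0$ if $(a\bmod p)\in\{0,\dots,(p-1)/2\}$ and $1$ otherwise. For $z=(d,x)\in\{0,1\}^{n-1}\times\{0,1\}^{n-1}$, $\mathrm{pmmajmod}_p(z)=\mathrm{MM}_p(\sum_{i}x_i(-1)^{h(d)_i})\oplus\mathrm{parity}(x)$. $\Delta$ is total variation distance. *)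

theory Defs
  imports "HOL-Analysis.Analysis" "HOL-Library.FuncSet"
begin

text \<open>Single-qubit operators as 2x2 complex matrices indexed by bool
  (False = |0>, True = |1>); M i j is the entry in row i, column j.\<close>

type_synonym qmat = "bool \<Rightarrow> bool \<Rightarrow> complex"

definition mmul :: "qmat \<Rightarrow> qmat \<Rightarrow> qmat" where
  "mmul A B = (\<lambda>i j. \<Sum>k\<in>UNIV. A i k * B k j)"

definition madd :: "qmat \<Rightarrow> qmat \<Rightarrow> qmat" where
  "madd A B = (\<lambda>i j. A i j + B i j)"

definition adj :: "qmat \<Rightarrow> qmat" where
  "adj A = (\<lambda>i j. cnj (A j i))"

definition Hgate :: qmat where
  "Hgate = (\<lambda>i j. (if i \<and> j then -1 else 1) / complex_of_real (sqrt 2))"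

text \<open>exp(-i theta X) = cos theta I - i sin theta X\<close>
definition expX :: "real \<Rightarrow> qmat" where
  "expX \<theta> = (\<lambda>i j. if i = j then complex_of_real (cos \<theta>)
                      else - \<i> * complex_of_real (sin \<theta>))"

definition proj0 :: qmat where "proj0 = (\<lambda>i j. if \<not> i \<and> \<not> j then 1 else 0)"
definition proj1 :: qmat where "proj1 = (\<lambda>i j. if i \<and> j then 1 else 0)"

definition Aop :: "real \<Rightarrow> qmat" where
  "Aop \<theta> = madd proj0 (mmul (expX \<theta>) proj1)"

text \<open>Binary tree B_n: parent of v_i (i >= 1) is v_((i-1) div 2); h(d)_i is the XOR
  of d_j over the edges e_j on the path from v_0 to v_i.\<close>
fun hpath :: "(nat \<Rightarrow> bool) \<Rightarrow> nat \<Rightarrow> bool" where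
  "hpath d 0 = False"
| "hpath d (Suc i) = (d (Suc i) \<noteq> hpath d (i div 2))"

text \<open>Bit strings indexed by 1..n-1 (edges e_1..e_(n-1), resp. vertices v_1..v_(n-1)).\<close>
definition bits :: "nat \<Rightarrow> (nat \<Rightarrow> bool) set" where
  "bits n = {1..<n} \<rightarrow>\<^sub>E (UNIV :: bool set)"

text \<open>Amplitude of |PM_n> at basis state |d>|x>|b> (edge qubits d, vertex qubits
  v_1..v_(n-1) given by x, root qubit v_0 given by b).\<close>
definition PM_amp :: "nat \<Rightarrow> (nat \<Rightarrow> bool) \<Rightarrow> (nat \<Rightarrow> bool) \<Rightarrow> bool \<Rightarrow> complex" where
  "PM_amp n d x b =
     complex_of_real (2 powr (-(real n - 1) / 2)) * (1 / complex_of_real (sqrt 2)) *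
     ((if (\<forall>i\<in>{1..<n}. x i = hpath d i) \<and> \<not> b then 1 else 0) +
      (if (\<forall>i\<in>{1..<n}. x i = (\<not> hpath d i)) \<and> b then 1 else 0))"

text \<open>psi = (I^(n-1) (x) (A_(pi/p)^dagger H)^(n-1) (x) (e^(-i pi X/4) H)) |PM_n>\<close>
definition psi_amp :: "nat \<Rightarrow> nat \<Rightarrow> (nat \<Rightarrow> bool) \<Rightarrow> (nat \<Rightarrow> bool) \<Rightarrow> bool \<Rightarrow> complex" where
  "psi_amp p n d y c =
     (\<Sum>x\<in>bits n. \<Sum>b\<in>UNIV.
        (\<Prod>i\<in>{1..<n}. mmul (adj (Aop (pi / real p))) Hgate (y i) (x i)) *
        mmul (expX (pi / 4)) Hgate c b * PM_amp n d x b)"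

definition outcomes :: "nat \<Rightarrow> ((nat \<Rightarrow> bool) \<times> (nat \<Rightarrow> bool) \<times> bool) set" where
  "outcomes n = bits n \<times> bits n \<times> (UNIV :: bool set)"

definition P_psi :: "nat \<Rightarrow> nat \<Rightarrow> (nat \<Rightarrow> bool) \<times> (nat \<Rightarrow> bool) \<times> bool \<Rightarrow> real" where
  "P_psi p n z = (case z of (d, x, c) \<Rightarrow> (cmod (psi_amp p n d x c))\<^sup>2) /
     (\<Sum>(d, x, c)\<in>outcomes n. (cmod (psi_amp p n d x c))\<^sup>2)"

text \<open>MM_p(a) = 0 iff (a mod p) in {0..(p-1)/2}; True encodes 1.\<close>
definition MM :: "nat \<Rightarrow> int \<Rightarrow> bool" where
  "MM p a = (\<not> (a mod int p \<in> {0 .. (int p - 1) div 2}))"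

definition parity :: "nat \<Rightarrow> (nat \<Rightarrow> bool) \<Rightarrow> bool" where
  "parity n x = odd (card {i\<in>{1..<n}. x i})"

definition pmmajmod :: "nat \<Rightarrow> nat \<Rightarrow> (nat \<Rightarrow> bool) \<Rightarrow> (nat \<Rightarrow> bool) \<Rightarrow> bool" where
  "pmmajmod p n d x =
     (MM p (\<Sum>i\<in>{1..<n}. (if x i then 1 else 0) * (if hpath d i then -1 else 1))
      \<noteq> parity n x)"

definition Q_target :: "nat \<Rightarrow> nat \<Rightarrow> (nat \<Rightarrow> bool) \<times> (nat \<Rightarrow> bool) \<times> bool \<Rightarrow> real" where
  "Q_target p n z = (case z of (d, x, c) \<Rightarrow>
     if c = pmmajmod p n d x then 1 / 2 ^ (2 * n - 2) else 0)"

definition tvd :: "'a set \<Rightarrow> ('a \<Rightarrow> real) \<Rightarrow> ('a \<Rightarrow> real) \<Rightarrow> real" where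
  "tvd S P Q = (1/2) * (\<Sum>z\<in>S. \<bar>P z - Q z\<bar>)"

end

theory Submission
  imports Defs
begin

definition uu :: "real \<Rightarrow> bool \<Rightarrow> bool \<Rightarrow> complex" where
  "uu th a b = (if a then (if b then - cis (-th) else cis th) else 1)"
lemma sum_bool: "(\<Sum>b\<in>(UNIV::bool set). f b) = f False + f True"
  by (simp add: UNIV_bool)
lemma Aop_e: "Aop th a b = (if a then (if b then complex_of_real (cos th) else 0)
     else (if b then - \<i> * complex_of_real (sin th) else 1))"
  by (cases a; cases b) (simp_all add: Aop_def madd_def mmul_def proj0_def proj1_def expX_def sum_bool)
lemma adjA_e: "adj (Aop th) a b = (if a then (if b then complex_of_real (cos th) else \<i> * complex_of_real (sin th))
     else (if b then 0 else 1))"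
  by (cases a; cases b) (simp_all add: adj_def Aop_e)
lemma M_entry: "mmul (adj (Aop th)) Hgate a b = uu th a b / complex_of_real (sqrt 2)"
  apply (cases a; cases b)
  apply (simp_all add: mmul_def adjA_e Hgate_def sum_bool uu_def cis.ctr)
  apply (simp_all add: complex_eq_iff)
  done
lemma R_entry: "mmul (expX (pi/4)) Hgate c b =
   (if b \<and> c then -1 else 1) * (if b then cnj ((1 - \<i>)/2) else (1 - \<i>)/2)"
  apply (cases c; cases b)
  by (simp_all add: mmul_def expX_def Hgate_def sum_bool cos_45 sin_45)

definition Sv :: "nat \<Rightarrow> (nat \<Rightarrow> bool) \<Rightarrow> (nat \<Rightarrow> bool) \<Rightarrow> int" where
  "Sv n d y = (\<Sum>i\<in>{1..<n}. (if y i then 1 else 0) * (if hpath d i then -1 else 1))"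

lemma sum_bits_delta:
  "(\<Sum>x\<in>bits n. if (\<forall>i\<in>{1..<n}. x i = g i) then f x else 0) = f (restrict g {1..<n})"
proof -
  have "(\<Sum>x\<in>bits n. if (\<forall>i\<in>{1..<n}. x i = g i) then f x else 0)
      = (\<Sum>x\<in>bits n. if x = restrict g {1..<n} then f x else 0)"
  proof (rule sum.cong)
    fix x assume x: "x \<in> bits n"
    have "(\<forall>i\<in>{1..<n}. x i = g i) \<longleftrightarrow> x = restrict g {1..<n}"
      using x by (auto simp: bits_def PiE_def extensional_def fun_eq_iff)
    then show "(if (\<forall>i\<in>{1..<n}. x i = g i) then f x else 0) = (if x = restrict g {1..<n} then f x else 0)"
      by simp
  qed simp
  also have "\<dots> = f (restrict g {1..<n})"
    by (simp add: sum.delta bits_def finite_PiE)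
  finally show ?thesis .
qed

lemma sum_bits_delta2:
  fixes f :: "(nat \<Rightarrow> bool) \<Rightarrow> complex"
  shows "(\<Sum>x\<in>bits n. f x * (if (\<forall>i\<in>{1..<n}. x i = g i) then 1 else 0)) = f (restrict g {1..<n})"
proof -
  have "(\<Sum>x\<in>bits n. f x * (if (\<forall>i\<in>{1..<n}. x i = g i) then 1 else 0))
      = (\<Sum>x\<in>bits n. if (\<forall>i\<in>{1..<n}. x i = g i) then f x else 0)"
    by (rule sum.cong) auto
  then show ?thesis using sum_bits_delta by simp
qed

abbreviation "Mm p \<equiv> mmul (adj (Aop (pi / real p))) Hgate"
abbreviation "Rm \<equiv> mmul (expX (pi / 4)) Hgate"
abbreviation "Kc n \<equiv> complex_of_real (2 powr (-(real n - 1) / 2)) * (1 / complex_of_real (sqrt 2))"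

lemma psi_formula: "psi_amp p n d y c =
   Kc n * (\<Prod>i\<in>{1..<n}. Mm p (y i) (hpath d i)) * Rm c False +
   Kc n * (\<Prod>i\<in>{1..<n}. Mm p (y i) (\<not> hpath d i)) * Rm c True"
proof -
  have e: "\<And>x. (\<Sum>b\<in>UNIV. (\<Prod>i\<in>{1..<n}. Mm p (y i) (x i)) * Rm c b * PM_amp n d x b)
     = (\<Prod>i\<in>{1..<n}. Mm p (y i) (x i)) * Rm c False * (Kc n * (if \<forall>i\<in>{1..<n}. x i = hpath d i then 1 else 0))
     + (\<Prod>i\<in>{1..<n}. Mm p (y i) (x i)) * Rm c True * (Kc n * (if \<forall>i\<in>{1..<n}. x i = (\<not> hpath d i) then 1 else 0))"
  proof -
    fix x
    have a: "PM_amp n d x False = Kc n * (if \<forall>i\<in>{1..<n}. x i = hpath d i then 1 else 0)"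
      by (simp add: PM_amp_def)
    have b: "PM_amp n d x True = Kc n * (if \<forall>i\<in>{1..<n}. x i = (\<not> hpath d i) then 1 else 0)"
      by (simp add: PM_amp_def)
    show "?thesis x" by (simp only: sum_bool a b)
  qed
  have p1: "(\<Prod>i\<in>{1..<n}. Mm p (y i) (restrict (hpath d) {1..<n} i)) = (\<Prod>i\<in>{1..<n}. Mm p (y i) (hpath d i))"
    by (rule prod.cong) auto
  have p2: "(\<Prod>i\<in>{1..<n}. Mm p (y i) (restrict (\<lambda>i. \<not> hpath d i) {1..<n} i)) = (\<Prod>i\<in>{1..<n}. Mm p (y i) (\<not> hpath d i))"
    by (rule prod.cong) auto
  show ?thesis
    unfolding psi_amp_def e sum.distrib
    by (simp only: mult.assoc[symmetric] sum_bits_delta2 p1 p2) (simp add: algebra_simps)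
qed

lemma sg_prod: "(\<Prod>i\<in>{1..<n}. (if y i then -1 else 1 :: complex)) = (if parity n y then -1 else 1)"
proof -
  have "(\<Prod>i\<in>{1..<n}. (if y i then -1 else 1 :: complex)) = (-1) ^ card {i\<in>{1..<n}. y i}"
    by (subst prod.If_cases) (auto simp: Int_def)
  then show ?thesis by (simp add: parity_def)
qed

lemma wlem: "\<sigma> = 1 \<or> \<sigma> = -1 \<Longrightarrow>
  (cmod (w + complex_of_real \<sigma> * cnj w))\<^sup>2 = 2 * (cmod w)\<^sup>2 + 2 * \<sigma> * Re (w\<^sup>2)"
  by (cases w) (auto simp: cmod_def power2_eq_square algebra_simps)

lemma uu_neg: "uu th a (\<not> b) = (if a then -1 else 1) * cnj (uu th a b)"
  by (cases a; cases b) (auto simp: uu_def cis_cnj)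
lemma uu_sq: "(uu th a b)^2 = cis (2*th*(if a then (if b then -1 else 1) else 0))"
  by (cases a; cases b) (auto simp: uu_def power2_eq_square cis_mult)
lemma uu_norm: "cmod (uu th a b) = 1"
  by (auto simp: uu_def)
lemma prod_cis: "(\<Prod>i\<in>A. cis (f i)) = cis (\<Sum>i\<in>A. f i)"
proof (cases "finite A")
  case True then show ?thesis by (induction A rule: finite_induct) (auto simp: cis_mult)
qed auto

lemma Sv_real: "real_of_int (Sv n d y) = (\<Sum>i\<in>{1..<n}. (if y i then (if hpath d i then -1 else 1) else 0))"
  unfolding Sv_def of_int_sum by (rule sum.cong) auto

lemma amp_sq:
  assumes n: "n \<ge> 1"
  shows "(cmod (psi_amp p n d y c))\<^sup>2 =
     (1 + (if c = parity n y then 1 else -1) * sin (2*pi*real_of_int (Sv n d y)/real p)) / (2 * 4^(n-1))"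
proof -
  define th where "th = pi / real p"
  define P0 where "P0 = (\<Prod>i\<in>{1..<n}. uu th (y i) (hpath d i))"
  define s2 where "s2 = complex_of_real (sqrt 2)"
  define r where "r = (1 - \<i>)/2"
  define sg where "sg = (if parity n y then -1 else 1 :: complex)"
  define ep where "ep = (if c then -1 else 1 :: complex)"
  have cardI: "card {1..<n} = n - 1" by simp
  have M0: "(\<Prod>i\<in>{1..<n}. Mm p (y i) (hpath d i)) = P0 / s2 ^ (n-1)"
    unfolding M_entry P0_def s2_def th_def by (simp add: prod_dividef)
  have M1: "(\<Prod>i\<in>{1..<n}. Mm p (y i) (\<not> hpath d i)) = sg * cnj P0 / s2 ^ (n-1)"
  proof -
    have "(\<Prod>i\<in>{1..<n}. Mm p (y i) (\<not> hpath d i)) =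
       (\<Prod>i\<in>{1..<n}. (if y i then -1 else 1) * cnj (uu th (y i) (hpath d i))) / s2 ^ (n-1)"
      unfolding M_entry uu_neg s2_def th_def by (simp add: prod_dividef)
    also have "\<dots> = (\<Prod>i\<in>{1..<n}. (if y i then -1 else 1)) * (\<Prod>i\<in>{1..<n}. cnj (uu th (y i) (hpath d i))) / s2 ^ (n-1)"
      by (simp only: prod.distrib)
    also have "\<dots> = sg * cnj P0 / s2 ^ (n-1)"
      by (simp only: sg_prod sg_def P0_def cnj_prod)
    finally show ?thesis .
  qed
  have R0: "Rm c False = r" by (simp add: R_entry r_def)
  have R1: "Rm c True = ep * cnj r" by (simp add: R_entry r_def ep_def)
  define sig where "sig = (if c = parity n y then 1 else -1 :: real)"
  have sig: "sg * ep = complex_of_real sig"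
    by (auto simp: sg_def ep_def sig_def)
  have psi: "psi_amp p n d y c = (Kc n / s2 ^ (n-1)) * (P0 * r + complex_of_real sig * cnj (P0 * r))"
    unfolding psi_formula M0 M1 R0 R1 sig[symmetric] by (simp add: algebra_simps add_divide_distrib)
  have nK: "(cmod (Kc n))\<^sup>2 = 1 / (2 * 2^(n-1))"
  proof -
    have "(cmod (Kc n))\<^sup>2 = (2 powr (-(real n - 1) / 2))\<^sup>2 / 2"
      by (simp add: norm_mult norm_divide power_mult_distrib power_divide)
    also have "(2 powr (-(real n - 1) / 2))\<^sup>2 = 2 powr (-(real n - 1))"
      by (simp add: powr_powr[symmetric] powr_realpow[symmetric] power2_eq_square powr_add[symmetric])
    also have "\<dots> = inverse (2 powr (real n - 1))" by (rule powr_minus)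
    also have "2 powr (real n - 1) = 2^(n-1)"
      using n by (simp add: powr_realpow[symmetric] of_nat_diff)
    also have "inverse ((2::real)^(n-1)) = 1 / 2^(n-1)" by (simp add: divide_inverse)
    finally show ?thesis by simp
  qed
  have ns2: "(cmod (s2 ^ (n-1)))\<^sup>2 = 2^(n-1)"
    by (simp add: s2_def norm_power power_mult_distrib[symmetric] power_even_eq[symmetric] power_mult)
  have nP0: "cmod P0 = 1" by (simp add: P0_def prod_norm[symmetric] uu_norm)
  have P0sq: "P0\<^sup>2 = cis (2 * pi * real_of_int (Sv n d y) / real p)"
  proof -
    have "P0\<^sup>2 = (\<Prod>i\<in>{1..<n}. (uu th (y i) (hpath d i))\<^sup>2)"
      by (simp add: P0_def prod_power_distrib)
    also have "\<dots> = cis (\<Sum>i\<in>{1..<n}. 2*th*(if y i then (if hpath d i then -1 else 1) else 0))"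
      by (simp add: uu_sq prod_cis)
    also have "(\<Sum>i\<in>{1..<n}. 2*th*(if y i then (if hpath d i then -1 else 1) else 0)) = 2*th*real_of_int (Sv n d y)"
      by (simp add: Sv_real sum_distrib_left)
    finally show ?thesis by (simp add: th_def)
  qed
  have sigpm: "sig = 1 \<or> sig = -1" by (auto simp: sig_def)
  have nw: "(cmod (P0 * r))\<^sup>2 = 1/2"
  proof -
    have "(cmod r)\<^sup>2 = 1/2" by (simp add: r_def cmod_def power2_eq_square)
    then show ?thesis by (simp add: norm_mult nP0 power_mult_distrib)
  qed
  have rsq: "r\<^sup>2 = - \<i> / 2" by (simp add: r_def power2_eq_square field_simps)
  have Rew: "Re ((P0 * r)\<^sup>2) = sin (2 * pi * real_of_int (Sv n d y) / real p) / 2"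
    by (simp add: power_mult_distrib rsq P0sq cis.ctr)
  have "(cmod (psi_amp p n d y c))\<^sup>2 = (cmod (Kc n))\<^sup>2 / (cmod (s2 ^ (n-1)))\<^sup>2 *
        (cmod (P0 * r + complex_of_real sig * cnj (P0 * r)))\<^sup>2"
    unfolding psi by (simp add: norm_mult norm_divide power_mult_distrib power_divide)
  also have "(cmod (P0 * r + complex_of_real sig * cnj (P0 * r)))\<^sup>2 = 1 + sig * sin (2 * pi * real_of_int (Sv n d y) / real p)"
    using wlem[OF sigpm, of "P0 * r"] nw Rew by simp
  finally show ?thesis unfolding nK ns2 sig_def
    by (simp add: power_mult_distrib[symmetric] field_simps)
qed

definition err :: "nat \<Rightarrow> int \<Rightarrow> real" where
  "err p s = (if MM p s then (1 + sin (2*pi*real_of_int s/real p))/2 else (1 - sin (2*pi*real_of_int s/real p))/2)"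

lemma finite_bits: "finite (bits n)" by (simp add: bits_def finite_PiE)
lemma card_bits: "card (bits n) = 2^(n-1)" by (simp add: bits_def card_PiE)

lemma sum_outcomes: "(\<Sum>z\<in>outcomes n. f z) = (\<Sum>d\<in>bits n. \<Sum>y\<in>bits n. f (d,y,False) + f (d,y,True))"
  by (simp add: outcomes_def sum.cartesian_product' sum_bool)

lemma norm1: assumes n: "n \<ge> 1"
  shows "(\<Sum>(d, x, c)\<in>outcomes n. (cmod (psi_amp p n d x c))\<^sup>2) = 1"
proof -
  have e: "\<And>d y. (cmod (psi_amp p n d y False))\<^sup>2 + (cmod (psi_amp p n d y True))\<^sup>2 = 1 / 4^(n-1)"
    unfolding amp_sq[OF n] by (auto simp: field_simps)
  have "(\<Sum>(d, x, c)\<in>outcomes n. (cmod (psi_amp p n d x c))\<^sup>2) = (\<Sum>d\<in>bits n. \<Sum>y\<in>bits n. 1 / 4^(n-1))"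
    unfolding sum_outcomes by (simp add: e)
  also have "\<dots> = real (2^(n-1)) * real (2^(n-1)) / 4^(n-1)" by (simp add: card_bits)
  also have "\<dots> = 1" by (simp add: power_mult_distrib[symmetric])
  finally show ?thesis .
qed

lemma P_psi_eq: "n \<ge> 1 \<Longrightarrow> P_psi p n (d, y, c) = (cmod (psi_amp p n d y c))\<^sup>2"
  unfolding P_psi_def using norm1 by simp

lemma pmm_eq: "pmmajmod p n d y = (MM p (Sv n d y) \<noteq> parity n y)"
  by (simp add: pmmajmod_def Sv_def)

lemma pair_lemma:
  fixes s A :: real
  assumes "\<bar>s\<bar> \<le> 1" "A > 0"
  shows "\<bar>(1 + (if False = q then 1 else -1) * s) / (2 * A) - (if False = (m \<noteq> q) then 1 / A else 0)\<bar> +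
  \<bar>(1 + (if True = q then 1 else -1) * s) / (2 * A) - (if True = (m \<noteq> q) then 1 / A else 0)\<bar>
  = 2 * (if m then (1 + s) / 2 else (1 - s) / 2) / A"
proof -
  have a1: "(1+s)/(2*A) - 1/A = -((1-s)/(2*A))" "(1-s)/(2*A) - 1/A = -((1+s)/(2*A))"
    using assms by (auto simp: field_simps)
  have a2: "(1+s)/(2*A) \<ge> 0" "(1-s)/(2*A) \<ge> 0" using assms by auto
  have a3: "(1-s)/(2*A) + (1-s)/(2*A) = 2 * ((1 - s) / 2) / A" "(1+s)/(2*A) + (1+s)/(2*A) = 2 * ((1 + s) / 2) / A"
    using assms by (auto simp: field_simps)
  have a4: "\<bar>1+s\<bar> = 1+s" "\<bar>1-s\<bar> = 1-s" "\<bar>2*A\<bar> = 2*A" using assms by auto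
  show ?thesis
    apply (cases m; cases q)
    by (simp_all add: a1 a2 a3 a4)
qed

lemma tvd_eq: assumes n: "n \<ge> 1"
  shows "tvd (outcomes n) (P_psi p n) (Q_target p n) = (\<Sum>d\<in>bits n. \<Sum>y\<in>bits n. err p (Sv n d y)) / 4^(n-1)"
proof -
  have q: "(2::real)^(2*n-2) = 4^(n-1)"
  proof -
    have "2*n-2 = 2*(n-1)" by arith
    then show ?thesis by (simp add: power_mult)
  qed
  have s1: "\<bar>sin (2*pi*real_of_int (Sv n d y)/real p)\<bar> \<le> 1" for d y by simp
  have Apos: "(4::real)^(n-1) > 0" by simp
  have e: "\<bar>P_psi p n (d,y,False) - Q_target p n (d,y,False)\<bar> + \<bar>P_psi p n (d,y,True) - Q_target p n (d,y,True)\<bar>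
     = 2 * err p (Sv n d y) / 4^(n-1)" for d y
  proof -
    have P: "P_psi p n (d,y,c) = (1 + (if c = parity n y then 1 else -1) * sin (2*pi*real_of_int (Sv n d y)/real p)) / (2 * 4^(n-1))" for c
      by (simp only: P_psi_eq[OF n] amp_sq[OF n])
    have Q: "Q_target p n (d,y,c) = (if c = (MM p (Sv n d y) \<noteq> parity n y) then 1 / 4^(n-1) else 0)" for c
      by (simp only: Q_target_def prod.case pmm_eq q)
    show ?thesis
      unfolding P Q err_def by (rule pair_lemma[OF s1 Apos])
  qed
  show ?thesis
    unfolding tvd_def sum_outcomes e by (simp add: sum_divide_distrib[symmetric] sum_distrib_left[symmetric])
qed

lemma cis_eq_1_dvd:
  assumes p: "p > 0" and c: "cis (2*pi*real_of_int m/real p) = 1"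
  shows "int p dvd m"
proof -
  have "exp (\<i> * complex_of_real (2*pi*real_of_int m/real p)) = 1" using c by (simp add: cis_conv_exp)
  then obtain k :: int where k: "Im (\<i> * complex_of_real (2*pi*real_of_int m/real p)) = of_int (2*k) * pi"
    unfolding exp_eq_1 by blast
  then have "2*pi*real_of_int m/real p = 2*pi*real_of_int k" by simp
  then have "real_of_int m = real_of_int k * real p" using p by (simp add: field_simps)
  then have "m = k * int p" by (metis of_int_eq_iff of_int_mult of_int_of_nat_eq)
  then show ?thesis by simp
qed

lemma orth:
  assumes p: "p > 0"
  shows "(\<Sum>t<p. cis (2*pi*real t*real_of_int m/real p)) = (if int p dvd m then of_nat p else 0)"
proof -
  define z where "z = cis (2*pi*real_of_int m/real p)"
  have zt: "cis (2*pi*real t*real_of_int m/real p) = z^t" for t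
    unfolding z_def Complex.DeMoivre by (simp add: algebra_simps)
  have zp: "z^p = 1"
  proof -
    have "z^p = cis (2*pi*real_of_int m)" unfolding z_def Complex.DeMoivre using p by (simp add: field_simps)
    also have "\<dots> = 1" by (rule cis_multiple_2pi) simp
    finally show ?thesis .
  qed
  have z1: "z = 1 \<longleftrightarrow> int p dvd m"
  proof
    assume "z = 1" then show "int p dvd m" using cis_eq_1_dvd[OF p] by (simp add: z_def)
  next
    assume "int p dvd m"
    then obtain k where m: "m = int p * k" by (auto elim: dvdE)
    have "z = cis (2*pi*real_of_int k)" unfolding z_def m using p by (simp add: field_simps)
    also have "\<dots> = 1" by (rule cis_multiple_2pi) simp
    finally show "z = 1" .
  qed
  show ?thesis unfolding zt sum_gp_strict zp z1 by simp
qed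

lemma swap3: "(\<Sum>x\<in>X. \<Sum>r\<in>R. \<Sum>t\<in>T. f x r t) = (\<Sum>t\<in>T. \<Sum>r\<in>R. \<Sum>x\<in>X. f x r t)"
proof -
  have "(\<Sum>x\<in>X. \<Sum>r\<in>R. \<Sum>t\<in>T. f x r t) = (\<Sum>x\<in>X. \<Sum>t\<in>T. \<Sum>r\<in>R. f x r t)"
    by (rule sum.cong[OF refl], rule sum.swap)
  also have "\<dots> = (\<Sum>t\<in>T. \<Sum>x\<in>X. \<Sum>r\<in>R. f x r t)" by (rule sum.swap)
  also have "\<dots> = (\<Sum>t\<in>T. \<Sum>r\<in>R. \<Sum>x\<in>X. f x r t)"
    by (rule sum.cong[OF refl], rule sum.swap)
  finally show ?thesis .
qed

lemma fourier:
  fixes S :: "'a \<Rightarrow> int" and G :: "int \<Rightarrow> real"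
  assumes X: "finite X" and p: "p > 0"
    and per: "\<And>s. G s = G (s mod int p)" and bd: "\<And>s. \<bar>G s\<bar> \<le> 1"
  shows "(\<Sum>x\<in>X. G (S x)) \<le> real (card X) * (\<Sum>r<p. G (int r)) / real p
     + (\<Sum>t\<in>{1..<p}. cmod (\<Sum>x\<in>X. cis (2*pi*real t*real_of_int (S x)/real p)))"
proof -
  define b where "b t = (\<Sum>x\<in>X. cis (2*pi*real t*real_of_int (S x)/real p))" for t
  define a where "a t = (\<Sum>r<p. complex_of_real (G (int r)) * cis (-(2*pi*real t*real r/real p)))" for t
  have ind: "G s = (\<Sum>r<p. G (int r) * (if int p dvd (s - int r) then 1 else 0))" for s
  proof -
    define r0 where "r0 = nat (s mod int p)"
    have r0: "r0 < p" "int r0 = s mod int p" using p by (auto simp: r0_def nat_less_iff)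
    have "(\<Sum>r<p. G (int r) * (if int p dvd (s - int r) then 1 else 0)) = (\<Sum>r<p. if r = r0 then G (int r) else 0)"
    proof (rule sum.cong)
      fix r assume "r \<in> {..<p}"
      then have "int p dvd (s - int r) \<longleftrightarrow> r = r0"
        using r0 by (auto simp: mod_eq_dvd_iff[symmetric])
      then show "G (int r) * (if int p dvd (s - int r) then 1 else 0) = (if r = r0 then G (int r) else 0)" by simp
    qed simp
    also have "\<dots> = G (s mod int p)" using r0 by simp
    finally show ?thesis using per by simp
  qed
  have ind2: "(if int p dvd m then 1 else 0 :: complex) = (1 / of_nat p) * (\<Sum>t<p. cis (2*pi*real t*real_of_int m/real p))" for m
    unfolding orth[OF p] using p by simp
  have split: "cis (2*pi*real t*real_of_int (s - int r)/real p) = cis (-(2*pi*real t*real r/real p)) * cis (2*pi*real t*real_of_int s/real p)" for t r s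
    by (simp add: cis_mult algebra_simps diff_divide_distrib)
  have "complex_of_real (\<Sum>x\<in>X. G (S x)) = (\<Sum>x\<in>X. \<Sum>r<p. complex_of_real (G (int r)) * (if int p dvd (S x - int r) then 1 else 0))"
  proof -
    have oi: "complex_of_real (if P then 1 else 0) = (if P then 1 else 0)" for P by simp
    show ?thesis by (subst ind) (simp only: of_real_sum of_real_mult oi)
  qed
  also have "\<dots> = (\<Sum>x\<in>X. \<Sum>r<p. \<Sum>t<p. (1 / of_nat p) * (complex_of_real (G (int r)) * cis (-(2*pi*real t*real r/real p)) * cis (2*pi*real t*real_of_int (S x)/real p)))"
    unfolding ind2 split by (simp add: sum_distrib_left mult_ac)
  also have "\<dots> = (\<Sum>t<p. \<Sum>r<p. \<Sum>x\<in>X. (1 / of_nat p) * (complex_of_real (G (int r)) * cis (-(2*pi*real t*real r/real p)) * cis (2*pi*real t*real_of_int (S x)/real p)))"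
    by (rule swap3)
  also have "\<dots> = (1 / of_nat p) * (\<Sum>t<p. a t * b t)"
    unfolding a_def b_def sum_product by (simp add: sum_distrib_left mult_ac)
  finally have main: "complex_of_real (\<Sum>x\<in>X. G (S x)) = (1 / of_nat p) * (\<Sum>t<p. a t * b t)" .
  have lt: "{..<p} = insert 0 {1..<p}" using p by auto
  have a0: "a 0 = complex_of_real (\<Sum>r<p. G (int r))" by (simp add: a_def of_real_sum)
  have b0: "b 0 = of_nat (card X)" by (simp add: b_def)
  have na: "cmod (a t) \<le> real p" for t
  proof -
    have "cmod (a t) \<le> (\<Sum>r<p. cmod (complex_of_real (G (int r)) * cis (-(2*pi*real t*real r/real p))))"
      unfolding a_def by (rule norm_sum)
    also have "\<dots> \<le> (\<Sum>r<p. 1)" by (rule sum_mono) (simp add: norm_mult bd)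
    finally show ?thesis by simp
  qed
  have rest: "Re (\<Sum>t\<in>{1..<p}. a t * b t) \<le> real p * (\<Sum>t\<in>{1..<p}. cmod (b t))"
  proof -
    have "Re (\<Sum>t\<in>{1..<p}. a t * b t) \<le> cmod (\<Sum>t\<in>{1..<p}. a t * b t)" by (rule complex_Re_le_cmod)
    also have "\<dots> \<le> (\<Sum>t\<in>{1..<p}. cmod (a t * b t))" by (rule norm_sum)
    also have "\<dots> \<le> (\<Sum>t\<in>{1..<p}. real p * cmod (b t))"
      by (rule sum_mono) (simp add: norm_mult mult_right_mono na)
    finally show ?thesis by (simp add: sum_distrib_left)
  qed
  have "(\<Sum>x\<in>X. G (S x)) = Re (complex_of_real (\<Sum>x\<in>X. G (S x)))" by simp
  also have "\<dots> = (Re (a 0 * b 0) + Re (\<Sum>t\<in>{1..<p}. a t * b t)) / real p"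
    unfolding main lt using p by (simp add: Re_divide power2_eq_square)
  also have "\<dots> \<le> (real (card X) * (\<Sum>r<p. G (int r)) + real p * (\<Sum>t\<in>{1..<p}. cmod (b t))) / real p"
    using rest p by (intro divide_right_mono) (auto simp: a0 b0)
  also have "\<dots> = real (card X) * (\<Sum>r<p. G (int r)) / real p + (\<Sum>t\<in>{1..<p}. cmod (b t))"
    using p by (simp add: field_simps)
  finally show ?thesis unfolding b_def .
qed

lemma char_d:
  "(\<Sum>y\<in>bits n. cis (a * real_of_int (Sv n d y))) = (\<Prod>i\<in>{1..<n}. 1 + cis (a * (if hpath d i then -1 else 1)))"
proof -
  have "(\<Sum>y\<in>bits n. cis (a * real_of_int (Sv n d y))) =
        (\<Sum>y\<in>bits n. \<Prod>i\<in>{1..<n}. cis (a * (if y i then (if hpath d i then -1 else 1) else 0)))"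
    by (rule sum.cong) (simp_all add: Sv_real sum_distrib_left prod_cis)
  also have "\<dots> = (\<Prod>i\<in>{1..<n}. \<Sum>b\<in>UNIV. cis (a * (if b then (if hpath d i then -1 else 1) else 0)))"
    unfolding bits_def by (rule prod_sum_PiE[symmetric]) auto
  also have "\<dots> = (\<Prod>i\<in>{1..<n}. 1 + cis (a * (if hpath d i then -1 else 1)))"
    by (simp add: sum_bool)
  finally show ?thesis .
qed

lemma char_bound:
  "cmod (\<Sum>z\<in>bits n \<times> bits n. cis (2*pi*real t*real_of_int (Sv n (fst z) (snd z))/real p))
     \<le> 2^(n-1) * (cmod (1 + cis (2*pi*real t/real p)))^(n-1)"
proof -
  define a where "a = 2*pi*real t/real p"
  have r: "2*pi*real t*real_of_int s/real p = a * real_of_int s" for s by (simp add: a_def)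
  have g: "cmod (1 + cis (a * (if h then -1 else 1))) = cmod (1 + cis a)" for h
  proof (cases h)
    case True
    have "1 + cis (-a) = cnj (1 + cis a)" by (simp add: cis_cnj)
    then show ?thesis using True by (simp del: complex_cnj_add)
  qed simp
  have "cmod (\<Sum>z\<in>bits n \<times> bits n. cis (a * real_of_int (Sv n (fst z) (snd z))))
      = cmod (\<Sum>d\<in>bits n. \<Sum>y\<in>bits n. cis (a * real_of_int (Sv n d y)))"
    by (simp add: sum.cartesian_product')
  also have "\<dots> \<le> (\<Sum>d\<in>bits n. cmod (\<Sum>y\<in>bits n. cis (a * real_of_int (Sv n d y))))"
    by (rule norm_sum)
  also have "\<dots> = (\<Sum>d\<in>bits n. (cmod (1 + cis a))^(n-1))"
    by (rule sum.cong) (simp_all add: char_d prod_norm[symmetric] g)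
  also have "\<dots> = 2^(n-1) * (cmod (1 + cis a))^(n-1)" by (simp add: card_bits)
  finally show ?thesis unfolding r a_def .
qed

lemma sin_half_lb:
  assumes "0 \<le> x" "x \<le> pi/3"
  shows "x/2 \<le> sin x"
proof -
  have "(\<lambda>x. sin x - x/2) 0 \<le> (\<lambda>x. sin x - x/2) x"
  proof (rule DERIV_nonneg_imp_nondecreasing[OF assms(1)])
    fix u assume u: "0 \<le> u" "u \<le> x"
    have "cos (pi/3) \<le> cos u"
      using u assms by (intro cos_monotone_0_pi_le) auto
    then have "0 \<le> cos u - 1/2" by (simp add: cos_60)
    moreover have "DERIV (\<lambda>x. sin x - x/2) u :> cos u - 1/2"
      by (auto intro!: derivative_eq_intros)
    ultimately show "\<exists>y. DERIV (\<lambda>x. sin x - x/2) u :> y \<and> 0 \<le> y" by blast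
  qed
  then show ?thesis by simp
qed

lemma cos_lb: "1 - x^2/2 \<le> cos (x::real)"
proof -
  have "cos x = cos (2 * (x/2))" by simp
  also have "\<dots> = 1 - 2 * sin (x/2) ^ 2" by (rule cos_double_sin)
  finally have c: "cos x = 1 - 2 * sin (x/2) ^ 2" .
  have "\<bar>sin (x/2)\<bar> \<le> \<bar>x/2\<bar>" by (rule abs_sin_x_le_abs_x)
  then have "sin (x/2) ^ 2 \<le> (x/2)^2" by (metis power2_abs power_mono abs_ge_zero)
  then show ?thesis using c by (simp add: power_divide)
qed

lemma cis_norm_sq: "(cmod (1 + cis a))^2 = 2 + 2 * cos a"
proof -
  have "(cmod (1 + cis a))^2 = (1 + cos a)^2 + (sin a)^2"
    by (simp add: cmod_def cis.ctr)
  also have "\<dots> = 2 + 2 * cos a" by (simp add: power2_eq_square algebra_simps sin_squared_eq)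
  finally show ?thesis .
qed

lemma cos_le_first:
  assumes p: "p \<ge> 3" and t: "1 \<le> t" "t < p"
  shows "cos (2*pi*real t/real p) \<le> cos (2*pi/real p)"
proof -
  have mono: "cos (2*pi*real s/real p) \<le> cos (2*pi/real p)" if s: "1 \<le> s" "2 * s \<le> p" for s :: nat
  proof (rule cos_monotone_0_pi_le)
    show "0 \<le> 2*pi/real p" by simp
    show "2*pi/real p \<le> 2*pi*real s/real p" using s p by (intro divide_right_mono) auto
    have "2*real s \<le> real p" using s by linarith
    then show "2*pi*real s/real p \<le> pi" using p by (simp add: field_simps)
  qed
  show ?thesis
  proof (cases "2*t \<le> p")
    case True then show ?thesis using mono t by auto
  next
    case False
    define s where "s = p - t"
    have s: "1 \<le> s" "2 * s \<le> p" using False t by (auto simp: s_def)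
    have "2*pi*real t/real p = 2*pi - 2*pi*real s/real p"
      using t p by (simp add: s_def of_nat_diff field_simps)
    then have "cos (2*pi*real t/real p) = cos (2*pi*real s/real p)"
      by (simp add: cos_diff)
    then show ?thesis using mono[OF s] by simp
  qed
qed

lemma gamma_bound:
  assumes p: "p \<ge> 3" and t: "1 \<le> t" "t < p"
  shows "(cmod (1 + cis (2*pi*real t/real p)))^2 \<le> 4 * (1 - 2/(real p)^2)"
proof -
  define x where "x = pi / real p"
  have x: "0 \<le> x" "x \<le> pi/3" using p by (auto simp: x_def field_simps)
  have "x/2 \<le> sin x" by (rule sin_half_lb[OF x])
  then have "(x/2)^2 \<le> (sin x)^2" using x by (intro power_mono) auto
  moreover have "8 / (real p)^2 \<le> pi^2/(real p)^2"
  proof -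
    have "(2.9::real)^2 \<le> pi^2" using pi_gt3 by (intro power_mono) auto
    then show ?thesis using p by (intro divide_right_mono) (auto simp: power2_eq_square)
  qed
  ultimately have sx: "2/(real p)^2 \<le> (sin x)^2" by (simp add: x_def power_divide)
  have "cos (2*pi/real p) = 1 - 2 * sin x ^ 2"
    unfolding x_def using cos_double_sin[of "pi / real p"] by (simp add: mult.assoc)
  then have "cos (2*pi/real p) \<le> 1 - 4/(real p)^2" using sx by simp
  then show ?thesis using cis_norm_sq[of "2*pi*real t/real p"] cos_le_first[OF p t] by simp
qed

lemma gamma_pow:
  assumes p: "p \<ge> 3" and t: "1 \<le> t" "t < p"
  shows "(cmod (1 + cis (2*pi*real t/real p)) / 2)^(n-1) \<le> exp (- real (n-1) / (real p)^2)"
proof -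
  define g where "g = cmod (1 + cis (2*pi*real t/real p)) / 2"
  have g0: "0 \<le> g" by (simp add: g_def)
  have "g^2 \<le> 1 - 2/(real p)^2" using gamma_bound[OF p t] by (simp add: g_def power_divide)
  also have "\<dots> \<le> exp (- 2/(real p)^2)" using exp_ge_add_one_self[of "- 2/(real p)^2"] by simp
  finally have g2: "g^2 \<le> exp (- 2/(real p)^2)" .
  have "(g^(n-1))^2 = (g^2)^(n-1)" by (simp add: power_mult[symmetric] mult.commute)
  also have "\<dots> \<le> (exp (- 2/(real p)^2))^(n-1)" using g2 by (intro power_mono) auto
  also have "\<dots> = (exp (- real (n-1) / (real p)^2))^2"
    by (simp add: exp_of_nat_mult[symmetric] power2_eq_square exp_add[symmetric] field_simps)
  finally show ?thesis unfolding g_def[symmetric]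
    by (rule power2_le_imp_le) simp
qed

lemma tele:
  assumes "m \<le> k"
  shows "(\<Sum>r\<in>{m..<k}. sin (2 * real r * x) * (2 * sin x)) = cos ((2*real m - 1)*x) - cos ((2*real k - 1)*x)"
proof -
  define g where "g r = cos ((2*real r - 1)*x)" for r :: nat
  have e: "sin (2 * real r * x) * (2 * sin x) = - (g (Suc r) - g r)" for r
  proof -
    have a: "(2*real (Suc r) - 1)*x = 2 * real r * x + x" "(2*real r - 1)*x = 2 * real r * x - x"
      by (simp_all add: algebra_simps)
    show ?thesis unfolding g_def a cos_add cos_diff by (simp add: algebra_simps)
  qed
  have "(\<Sum>r\<in>{m..<k}. sin (2 * real r * x) * (2 * sin x)) = - (\<Sum>r\<in>{m..<k}. g (Suc r) - g r)"
    by (simp only: e sum_negf)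
  also have "\<dots> = g m - g k" using sum_Suc_diff'[OF assms, of g] by simp
  finally show ?thesis by (simp add: g_def)
qed

lemma avg_bound:
  assumes p: "p \<ge> 3" "odd p"
  shows "(\<Sum>r<p. err p (int r)) \<le> real p / 2 - real p / pi + 1/2"
proof -
  define q where "q = p div 2"
  have pq: "p = 2*q + 1" using p by (simp add: q_def)
  define x where "x = pi / real p"
  have xpos: "0 < x" using p by (simp add: x_def)
  have x3: "x \<le> pi/3" using p by (simp add: x_def field_simps)
  have sx: "0 < sin x" using xpos x3 by (intro sin_gt_zero) auto
  have ang: "2*pi*real_of_int (int r)/real p = 2 * real r * x" for r by (simp add: x_def)
  have MMr: "MM p (int r) \<longleftrightarrow> q < r" if "r < p" for r
  proof -
    have "int r mod int p = int r" using that by simp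
    moreover have "(int p - 1) div 2 = int q" using pq by simp
    ultimately show ?thesis unfolding MM_def by auto
  qed
  define s where "s r = sin (2 * real r * x)" for r :: nat
  have "(\<Sum>r<p. err p (int r)) = (\<Sum>r\<in>{0..<p}. err p (int r))"
    by (simp add: atLeast0LessThan)
  also have "\<dots> = (\<Sum>r\<in>{0..<q+1}. err p (int r)) + (\<Sum>r\<in>{q+1..<p}. err p (int r))"
    by (rule sum.atLeastLessThan_concat[symmetric]) (use pq in auto)
  also have "(\<Sum>r\<in>{0..<q+1}. err p (int r)) = (\<Sum>r\<in>{0..<q+1}. (1 - s r)/2)"
  proof (rule sum.cong[OF refl])
    fix r assume "r \<in> {0..<q+1}"
    then have "r < p" "\<not> q < r" using pq by auto
    then have "\<not> MM p (int r)" using MMr by blast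
    then show "err p (int r) = (1 - s r)/2" unfolding err_def s_def ang by simp
  qed
  also have "(\<Sum>r\<in>{q+1..<p}. err p (int r)) = (\<Sum>r\<in>{q+1..<p}. (1 + s r)/2)"
  proof (rule sum.cong[OF refl])
    fix r assume "r \<in> {q+1..<p}"
    then have "r < p" "q < r" by auto
    then have "MM p (int r)" using MMr by blast
    then show "err p (int r) = (1 + s r)/2" unfolding err_def s_def ang by simp
  qed
  also have "(\<Sum>r\<in>{0..<q+1}. (1 - s r)/2) + (\<Sum>r\<in>{q+1..<p}. (1 + s r)/2)
     = real p / 2 - ((\<Sum>r\<in>{0..<q+1}. s r) - (\<Sum>r\<in>{q+1..<p}. s r)) / 2"
    using pq by (simp add: sum_subtractf sum.distrib diff_divide_distrib add_divide_distrib sum_divide_distrib[symmetric])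
  also have "(\<Sum>r\<in>{0..<q+1}. s r) - (\<Sum>r\<in>{q+1..<p}. s r) = (1 + cos x) / sin x"
  proof -
    have c1: "(2*real (q+1) - 1)*x = pi" using p unfolding x_def pq by (simp add: field_simps)
    have c2: "(2*real p - 1)*x = 2*pi - x" using p unfolding x_def by (simp add: field_simps)
    have t1: "(\<Sum>r\<in>{0..<q+1}. s r) * (2 * sin x) = cos x + 1"
      using tele[of 0 "q+1" x] c1 by (simp only: s_def sum_distrib_right) simp
    have t2: "(\<Sum>r\<in>{q+1..<p}. s r) * (2 * sin x) = -1 - cos x"
      using tele[of "q+1" p x] c1 c2 pq by (simp only: s_def sum_distrib_right) (simp add: cos_diff)
    have "((\<Sum>r\<in>{0..<q+1}. s r) - (\<Sum>r\<in>{q+1..<p}. s r)) * (2 * sin x) = 2 * (1 + cos x)"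
      using t1 t2 by (simp add: algebra_simps)
    then show ?thesis using sx by (simp add: field_simps)
  qed
  also have "real p / 2 - (1 + cos x) / sin x / 2 \<le> real p / 2 - real p / pi + 1/2"
  proof -
    have "2 - x^2/2 \<le> 1 + cos x" using cos_lb[of x] by simp
    moreover have "sin x \<le> x" using xpos by (intro sin_x_le_x) simp
    moreover have x2: "x \<le> 2" using x3 pi_less_4 by linarith
    ultimately have "(2 - x^2/2) / x \<le> (1 + cos x) / sin x"
    proof -
      assume a: "2 - x^2/2 \<le> 1 + cos x" "sin x \<le> x"
      have "x*x \<le> 2*2" by (rule mult_mono) (use x2 xpos in auto)
      then have pos: "0 \<le> 2 - x^2/2" by (simp add: power2_eq_square)
      have "(2 - x^2/2) / x \<le> (2 - x^2/2) / sin x"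
        using pos sx a(2) by (intro divide_left_mono) auto
      also have "\<dots> \<le> (1 + cos x) / sin x" using a(1) sx by (intro divide_right_mono) auto
      finally show ?thesis .
    qed
    moreover have "(2 - x^2/2) / x = 2 * real p / pi - x/2"
      using xpos p unfolding x_def by (simp add: field_simps power2_eq_square)
    ultimately have "2 * real p / pi - 1 \<le> (1 + cos x) / sin x" using x2 by linarith
    then have "2 * (real p / pi) - 1 \<le> (1 + cos x) / sin x" by simp
    moreover have "\<And>C D :: real. 2 * D - 1 \<le> C \<Longrightarrow> real p / 2 - C / 2 \<le> real p / 2 - D + 1/2"
      by linarith
    ultimately show ?thesis by blast
  qed
  finally show ?thesis .
qed

lemma err_per: "p > 0 \<Longrightarrow> err p s = err p (s mod int p)"
proof -
  assume p: "p > 0"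
  have s: "real_of_int s = real_of_int (s mod int p) + real p * real_of_int (s div int p)"
    by (metis mult_div_mod_eq of_int_add of_int_mult of_int_of_nat_eq add.commute)
  have a: "2*pi*real_of_int s/real p = 2*pi*real_of_int (s mod int p)/real p + (2*pi) * real_of_int (s div int p)"
    unfolding s using p by (simp add: field_simps)
  have "sin (2*pi*real_of_int s/real p) = sin (2*pi*real_of_int (s mod int p)/real p)"
    unfolding a sin_add by simp
  moreover have "MM p s = MM p (s mod int p)" by (simp add: MM_def)
  ultimately show ?thesis by (simp add: err_def)
qed

lemma err_bd: "\<bar>err p s\<bar> \<le> 1"
proof -
  have a: "-1 \<le> sin (2*pi*real_of_int s/real p)" "sin (2*pi*real_of_int s/real p) \<le> 1" by simp_all
  show ?thesis
  proof (cases "MM p s")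
    case True then show ?thesis using a unfolding err_def by (simp add: abs_le_iff; linarith)
  next
    case False then show ?thesis using a unfolding err_def by (simp add: abs_le_iff; linarith)
  qed
qed

lemma main_bound:
  assumes p: "p \<ge> 3" "odd p" and n: "n \<ge> 2"
  shows "tvd (outcomes n) (P_psi p n) (Q_target p n)
     \<le> 1/2 - 1/pi + 1/(2 * real p) + real p * exp (- real (n-1) / (real p)^2)"
proof -
  have n1: "n \<ge> 1" using n by simp
  have p0: "p > 0" using p by simp
  define E where "E = exp (- real (n-1) / (real p)^2)"
  define X where "X = bits n \<times> bits n"
  have X: "finite X" by (simp add: X_def finite_bits)
  have cX: "real (card X) = 4^(n-1)"
  proof -
    have "real (card X) = (2::real)^(n-1) * 2^(n-1)" by (simp add: X_def card_cartesian_product card_bits)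
    also have "\<dots> = (2*2)^(n-1)" by (simp only: power_mult_distrib)
    finally show ?thesis by simp
  qed
  have ch: "cmod (\<Sum>z\<in>X. cis (2*pi*real t*real_of_int (Sv n (fst z) (snd z))/real p)) \<le> 4^(n-1) * E"
    if t: "t \<in> {1..<p}" for t
  proof -
    have "cmod (\<Sum>z\<in>X. cis (2*pi*real t*real_of_int (Sv n (fst z) (snd z))/real p))
        \<le> 2^(n-1) * (cmod (1 + cis (2*pi*real t/real p)))^(n-1)"
      unfolding X_def by (rule char_bound)
    also have "\<dots> = 4^(n-1) * (cmod (1 + cis (2*pi*real t/real p)) / 2)^(n-1)"
      by (simp only: power_mult_distrib[symmetric]) simp
    also have "\<dots> \<le> 4^(n-1) * E"
      unfolding E_def using gamma_pow[OF p(1), of t n] t by (intro mult_left_mono) auto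
    finally show ?thesis .
  qed
  have "(\<Sum>d\<in>bits n. \<Sum>y\<in>bits n. err p (Sv n d y)) = (\<Sum>z\<in>X. err p (Sv n (fst z) (snd z)))"
    by (simp add: X_def sum.cartesian_product')
  also have "\<dots> \<le> real (card X) * (\<Sum>r<p. err p (int r)) / real p
     + (\<Sum>t\<in>{1..<p}. cmod (\<Sum>z\<in>X. cis (2*pi*real t*real_of_int (Sv n (fst z) (snd z))/real p)))"
    by (rule fourier[where G="err p" and S="\<lambda>z. Sv n (fst z) (snd z)", OF X p0 err_per[OF p0] err_bd])
  also have "\<dots> \<le> 4^(n-1) * (\<Sum>r<p. err p (int r)) / real p + (\<Sum>t\<in>{1..<p}. 4^(n-1) * E)"
    unfolding cX by (intro add_left_mono sum_mono ch)
  also have "(\<Sum>t\<in>{1..<p}. 4^(n-1) * E) \<le> 4^(n-1) * (real p * E)"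
  proof -
    have "(\<Sum>t\<in>{1..<p}. (4::real)^(n-1) * E) = real (p - 1) * (4^(n-1) * E)" by simp
    also have "\<dots> \<le> real p * (4^(n-1) * E)" by (intro mult_right_mono) (auto simp: E_def)
    finally show ?thesis by simp
  qed
  finally have S: "(\<Sum>d\<in>bits n. \<Sum>y\<in>bits n. err p (Sv n d y)) \<le>
      4^(n-1) * ((\<Sum>r<p. err p (int r)) / real p + real p * E)"
    by (simp add: algebra_simps)
  have "tvd (outcomes n) (P_psi p n) (Q_target p n) = (\<Sum>d\<in>bits n. \<Sum>y\<in>bits n. err p (Sv n d y)) / 4^(n-1)"
    by (rule tvd_eq[OF n1])
  also have "\<dots> \<le> (\<Sum>r<p. err p (int r)) / real p + real p * E"
    using S by (simp add: divide_le_eq mult.commute)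
  also have "(\<Sum>r<p. err p (int r)) / real p + real p * E \<le> 1/2 - 1/pi + 1/(2 * real p) + real p * E"
  proof -
    have "(\<Sum>r<p. err p (int r)) / real p \<le> (real p / 2 - real p / pi + 1/2) / real p"
      using avg_bound[OF p] p0 by (intro divide_right_mono) auto
    also have "(real p / 2 - real p / pi + 1/2) / real p = 1/2 - 1/pi + 1/(2 * real p)"
      using p0 by (simp add: field_simps)
    finally show ?thesis by simp
  qed
  finally show ?thesis unfolding E_def .
qed

theorem theorem6p5:
  shows "\<exists>C::real. \<forall>(p::nat) (n::nat). prime p \<and> odd p \<and> n \<ge> 2 \<longrightarrow>
    tvd (outcomes n) (P_psi p n) (Q_target p n)
      \<le> 1/2 - 1/pi + 1/(2 * real p) + C * real p powr (3/2) * exp (- real n / (4 * (real p)\<^sup>2))"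
proof (intro exI[of _ 1] allI impI)
  fix p n :: nat
  assume h: "prime p \<and> odd p \<and> n \<ge> 2"
  have p2: "p \<ge> 2" using h prime_ge_2_nat by blast
  have p: "p \<ge> 3" using p2 h by (cases "p = 2") auto
  have n: "n \<ge> 2" using h by simp
  have pp: "real p \<le> real p powr (3/2)"
  proof -
    have "real p powr 1 \<le> real p powr (3/2)" using p by (intro powr_mono) auto
    then show ?thesis using p by simp
  qed
  have ee: "exp (- real (n-1) / (real p)^2) \<le> exp (- real n / (4 * (real p)\<^sup>2))"
  proof -
    have "real n \<le> 4 * real (n-1)" using n by (simp add: of_nat_diff)
    then have "real n / (4 * (real p)\<^sup>2) \<le> 4 * real (n-1) / (4 * (real p)\<^sup>2)"
      using p by (intro divide_right_mono) auto
    then have "real n / (4 * (real p)\<^sup>2) \<le> real (n-1) / (real p)\<^sup>2" by simp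
    then show ?thesis by simp
  qed
  have "real p * exp (- real (n-1) / (real p)^2) \<le> real p powr (3/2) * exp (- real n / (4 * (real p)\<^sup>2))"
    by (intro mult_mono pp ee) auto
  then show "tvd (outcomes n) (P_psi p n) (Q_target p n)
      \<le> 1/2 - 1/pi + 1/(2 * real p) + 1 * real p powr (3/2) * exp (- real n / (4 * (real p)\<^sup>2))"
    using main_bound[OF p _ n] h by simp
qed

end
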